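(* Let $\Omega=\{\Omega_1,\dots,\Omega_N\}$ be a finite set of points with distance function $d$, let $1\le n<N$, and let $r\in\{1,\dots,n\}$. Define, for $t\in\{1,\dots,n\}$, $f(t)=\max\big(d(\Omega_{n+1},\Omega_t),\ MMJ(\Omega_t,\Omega_r~|~\Omega_{[1,n]})\big)$, and $\mathbb{X}=\{f(t): t\in\{1,\dots,n\}\}$. Then $MMJ(\Omega_{n+1},\Omega_r~|~\Omega_{[1,n+1]})=\min(\mathbb{X})$.
   Context: $\Omega$ is a finite set of points indexed $\Omega_1,\dots,\Omega_N$, and $\Omega_{[1,n]}=\{\Omega_1,\dots,\Omega_n\}$. $d:\Omega\times\Omega\to[0,\infty)$ is a distance function (e.g. Euclidean distance), symmetric with $d(x,x)=0$. For a subset $S\subseteq\Omega$, a path from $i$ to $j$ in $S$ is a finite sequence of points of $S$ (at least two) starting at $i$ and ending at $j$, with no repeated points except that start and end may coincide when $i=j$. A jump of a path is the distance $d(x,y)$ between two consecutive points $x,y$, and $max\_jump$ of a path is its largest jump. The Min-Max-Jump distance with context $S$ is $MMJ(i,j~|~S)=\min\{max\_jump(\epsilon): \epsilon \text{ a path from } i \text{ to } j \text{ in } S\}$ for $i,j\in S$, with $MMJ(i,i~|~S)=0$. *)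

theory Defs
  imports "HOL-Analysis.Analysis"
begin

definition is_path :: "'a set \<Rightarrow> 'a \<Rightarrow> 'a \<Rightarrow> 'a list \<Rightarrow> bool" where
  "is_path S i j p \<longleftrightarrow> length p \<ge> 2 \<and> set p \<subseteq> S \<and> hd p = i \<and> last p = j \<and>
     (distinct p \<or> (i = j \<and> distinct (tl p)))"

definition max_jump :: "('a \<Rightarrow> 'a \<Rightarrow> real) \<Rightarrow> 'a list \<Rightarrow> real" where
  "max_jump d p = Max (set (map (\<lambda>k. d (p ! k) (p ! Suc k)) [0..<length p - 1]))"

definition MMJ :: "('a \<Rightarrow> 'a \<Rightarrow> real) \<Rightarrow> 'a \<Rightarrow> 'a \<Rightarrow> 'a set \<Rightarrow> real" where
  "MMJ d i j S = (if i = j then 0 else Min (max_jump d ` {p. is_path S i j p}))"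

end

theory Submission
  imports Defs
begin

definition jumps :: "('a \<Rightarrow> 'a \<Rightarrow> real) \<Rightarrow> 'a list \<Rightarrow> real set" where
  "jumps d p = set (map (\<lambda>k. d (p ! k) (p ! Suc k)) [0..<length p - 1])"

lemma jumps_cons:
  assumes "p \<noteq> []"
  shows "jumps d (a # p) = insert (d a (hd p)) (jumps d p)"
proof -
  obtain m where m: "length p = Suc m" using assms by (cases p) auto
  have "[0..<length p] = 0 # map Suc [0..<m]" using m
    by (simp add: upt_conv_Cons map_Suc_upt)
  then show ?thesis using assms m unfolding jumps_def
    by (cases p) (auto simp: image_iff)
qed

lemma max_jump_jumps: "max_jump d p = Max (jumps d p)"
  unfolding max_jump_def jumps_def by simp

lemma jumps_ne: "length p \<ge> 2 \<Longrightarrow> jumps d p \<noteq> {}"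
  unfolding jumps_def by auto

lemma jumps_fin: "finite (jumps d p)"
  unfolding jumps_def by simp

lemma mj_two: "max_jump d [a, b] = d a b"
  unfolding max_jump_def by simp

lemma mj_cons:
  assumes "length p \<ge> 2"
  shows "max_jump d (a # p) = max (d a (hd p)) (max_jump d p)"
proof -
  have "p \<noteq> []" using assms by auto
  then show ?thesis unfolding max_jump_jumps
    using jumps_cons[of p d a] jumps_ne[OF assms, of d] jumps_fin[of d p]
    by simp
qed

lemma paths_finite:
  assumes "finite S"
  shows "finite {p. is_path S i j p}"
proof -
  have "{p. is_path S i j p} \<subseteq> {p. set p \<subseteq> S \<and> length p \<le> card S + 1}"
  proof
    fix p assume "p \<in> {p. is_path S i j p}"
    then have P: "is_path S i j p" by simp
    then have sub: "set p \<subseteq> S" unfolding is_path_def by auto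
    have "length p \<le> card S + 1"
    proof (cases "distinct p")
      case True
      then have "length p = card (set p)" by (simp add: distinct_card)
      also have "\<dots> \<le> card S" using card_mono[OF assms sub] .
      finally show ?thesis by simp
    next
      case False
      then have "distinct (tl p)" using P unfolding is_path_def by auto
      then have "length (tl p) = card (set (tl p))" by (simp add: distinct_card)
      also have "set (tl p) \<subseteq> S" using sub by (cases p) auto
      then have "card (set (tl p)) \<le> card S" using card_mono[OF assms] by blast
      finally show ?thesis by simp
    qed
    then show "p \<in> {p. set p \<subseteq> S \<and> length p \<le> card S + 1}" using sub by simp
  qed
  moreover have "finite {p. set p \<subseteq> S \<and> length p \<le> card S + 1}"
    using finite_lists_length_le[OF assms] by simp
  ultimately show ?thesis by (rule finite_subset)
qed

lemma mmj_le:
  assumes "finite S" "is_path S i j p" "i \<noteq> j"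
  shows "MMJ d i j S \<le> max_jump d p"
  unfolding MMJ_def using assms paths_finite[OF assms(1), of i j]
  by (auto intro!: Min_le)

lemma mmj_ex:
  assumes "finite S" "i \<in> S" "j \<in> S" "i \<noteq> j"
  shows "\<exists>p. is_path S i j p \<and> MMJ d i j S = max_jump d p"
proof -
  have "is_path S i j [i, j]" using assms unfolding is_path_def by auto
  then have ne: "max_jump d ` {p. is_path S i j p} \<noteq> {}" by blast
  have "MMJ d i j S \<in> max_jump d ` {p. is_path S i j p}"
    unfolding MMJ_def using assms(4) Min_in[OF finite_imageI[OF paths_finite[OF assms(1)]] ne]
    by simp
  then show ?thesis by force
qed

theorem theorem3p3:
  fixes \<Omega> :: "nat \<Rightarrow> 'a" and d :: "'a \<Rightarrow> 'a \<Rightarrow> real" and N n r :: nat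
  assumes inj: "inj_on \<Omega> {1..N}"
    and d_nonneg: "\<And>x y. d x y \<ge> 0"
    and d_sym: "\<And>x y. d x y = d y x"
    and d_refl: "\<And>x. d x x = 0"
    and n_ge: "1 \<le> n" and n_lt: "n < N"
    and r_in: "r \<in> {1..n}"
  shows "MMJ d (\<Omega> (n+1)) (\<Omega> r) (\<Omega> ` {1..n+1}) =
         Min ((\<lambda>t. max (d (\<Omega> (n+1)) (\<Omega> t)) (MMJ d (\<Omega> t) (\<Omega> r) (\<Omega> ` {1..n}))) ` {1..n})"
    (is "?L = Min (?f ` _)")
proof -
  define x where "x = \<Omega> (n+1)"
  define S where "S = \<Omega> ` {1..n}"
  have S': "\<Omega> ` {1..n+1} = insert x S" unfolding x_def S_def
    by (auto simp: atLeastAtMostSuc_conv)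
  have xS: "x \<notin> S"
  proof
    assume "x \<in> S"
    then obtain k where "k \<in> {1..n}" "\<Omega> k = \<Omega> (n+1)" unfolding S_def x_def by auto
    with inj n_lt show False by (auto dest: inj_onD)
  qed
  have finS: "finite S" unfolding S_def by simp
  have rS: "\<Omega> r \<in> S" using r_in unfolding S_def by simp
  have xr: "x \<noteq> \<Omega> r" using xS rS by auto
  have finX: "finite (?f ` {1..n})" by simp
  have neX: "?f ` {1..n} \<noteq> {}" using n_ge by simp
  have L: "?L = MMJ d x (\<Omega> r) (insert x S)" using S' x_def by simp
  show ?thesis
  proof (rule antisym)
    show "?L \<le> Min (?f ` {1..n})"
    proof (rule Min.boundedI[OF finX neX])
      fix y assume "y \<in> ?f ` {1..n}"
      then obtain t where t: "t \<in> {1..n}" "y = ?f t" by auto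
      have tS: "\<Omega> t \<in> S" using t unfolding S_def by simp
      show "?L \<le> y"
      proof (cases "\<Omega> t = \<Omega> r")
        case True
        have "is_path (insert x S) x (\<Omega> r) [x, \<Omega> r]" using rS xr unfolding is_path_def by auto
        then have "?L \<le> d x (\<Omega> r)" using L mmj_le[of "insert x S" x "\<Omega> r" "[x, \<Omega> r]" d] finS xr
          by (simp add: mj_two)
        then show ?thesis using t True x_def by (simp add: S_def[symmetric])
      next
        case False
        obtain p where p: "is_path S (\<Omega> t) (\<Omega> r) p" "MMJ d (\<Omega> t) (\<Omega> r) S = max_jump d p"
          using mmj_ex[OF finS tS rS False] by blast
        have dp: "distinct p" using p(1) False unfolding is_path_def by auto
        have "is_path (insert x S) x (\<Omega> r) (x # p)" using p(1) dp xS unfolding is_path_def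
          by (cases p) auto
        then have "?L \<le> max_jump d (x # p)" using L mmj_le[OF _ _ xr, of "insert x S" "x # p" d] finS by simp
        also have "\<dots> = max (d x (\<Omega> t)) (max_jump d p)"
          using mj_cons[of p d x] p(1) unfolding is_path_def by auto
        finally show ?thesis using t p(2) x_def S_def by simp
      qed
    qed
  next
    obtain p where p: "is_path (insert x S) x (\<Omega> r) p" "MMJ d x (\<Omega> r) (insert x S) = max_jump d p"
      using mmj_ex[of "insert x S" x "\<Omega> r" d] finS rS xr by auto
    have dp: "distinct p" using p(1) xr unfolding is_path_def by auto
    have p2: "length p \<ge> 2" "hd p = x" using p(1) unfolding is_path_def by auto
    obtain q where pq: "p = x # q" "q \<noteq> []"
    proof (cases p)
      case Nil then show ?thesis using p2 by simp
    next
      case (Cons a q) then show ?thesis using p2 that by (cases q) auto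
    qed
    have qS: "set q \<subseteq> S" using p(1) dp pq unfolding is_path_def by auto
    have hq: "hd q \<in> S" using qS pq(2) by auto
    then obtain t where t: "t \<in> {1..n}" "hd q = \<Omega> t" unfolding S_def by auto
    have lq: "last q = \<Omega> r" using p(1) pq unfolding is_path_def by auto
    show "Min (?f ` {1..n}) \<le> ?L"
    proof (cases "length q \<ge> 2")
      case True
      have tr: "\<Omega> t \<noteq> \<Omega> r"
      proof
        assume "\<Omega> t = \<Omega> r"
        then have "hd q = last q" using t lq by simp
        moreover have "distinct q" using dp pq by simp
        ultimately show False using True
        proof -
          obtain a b rest where q3: "q = a # b # rest" using True
            by (cases q; cases "tl q") auto
          have "last q \<in> set (b # rest)" using q3 by simp
          then show False using q3 \<open>distinct q\<close> \<open>hd q = last q\<close> by auto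
        qed
      qed
      have qp: "is_path S (\<Omega> t) (\<Omega> r) q" using True qS t lq dp pq unfolding is_path_def by auto
      have "Min (?f ` {1..n}) \<le> ?f t" using t finX by simp
      also have "\<dots> \<le> max (d x (\<Omega> t)) (max_jump d q)"
        using mmj_le[OF finS qp tr, of d] x_def S_def by auto
      also have "\<dots> = max_jump d p" using pq mj_cons[OF True, of d x] t by simp
      finally show ?thesis using p(2) L by simp
    next
      case False
      then have "q = [\<Omega> r]" using pq(2) lq by (cases q) (auto simp: Suc_le_eq)
      then have "max_jump d p = d x (\<Omega> r)" using pq by (simp add: mj_two)
      moreover have "Min (?f ` {1..n}) \<le> ?f r" using r_in finX by simp
      ultimately show ?thesis using p(2) L x_def using d_nonneg[of "\<Omega> (n+1)" "\<Omega> r"] by (simp add: MMJ_def)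
    qed
  qed
qed

end
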